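(* Let $\mathcal{A}=M_n(\mathbb{F})$ be endowed with an involution $*$, let $\mathcal{A}^+=\{a:a^*=a\}$, $\mathcal{A}^-=\{a:a^*=-a\}$, and let $u\in\mathcal{A}$ be invertible. Then: (1) if $*$ is the transpose involution and $u^{-1}\mathcal{A}^+u\subseteq\mathcal{A}^+$, then $u^{-1}\mathcal{A}^-u\subseteq\mathcal{A}^-$; (2) if $n=2k$, $*$ is the symplectic involution, and $u^{-1}\mathcal{A}^-u\subseteq\mathcal{A}^-$, then $u^{-1}\mathcal{A}^+u\subseteq\mathcal{A}^+$.
   Context: The symplectic involution on $M_{2k}(\mathbb{F})$ is $\begin{pmatrix}A&B\\C&D\end{pmatrix}^s=\begin{pmatrix}D^t&-B^t\\-C^t&A^t\end{pmatrix}$ for $A,B,C,D\in M_k(\mathbb{F})$. *)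

theory Defs
  imports "HOL-Analysis.Analysis"
begin

text \<open>Matrices in M_n(F) are rendered as 'a^'n^'n (row index first).
  For M_{2k}(F) the index type is 'k + 'k: Inl i is the i-th index of the first
  block, Inr i the i-th index of the second block, so that
  X = [[A, B], [C, D]] with A i j = X$Inl i$Inl j, B i j = X$Inl i$Inr j,
  C i j = X$Inr i$Inl j, D i j = X$Inr i$Inr j.\<close>

definition symplectic_inv ::
  "'a::ring_1 ^ ('k::finite + 'k) ^ ('k + 'k) \<Rightarrow> 'a ^ ('k + 'k) ^ ('k + 'k)" where
  "symplectic_inv X = (\<chi> r c. case (r, c) of
      (Inl i, Inl j) \<Rightarrow> X $ Inr j $ Inr i
    | (Inl i, Inr j) \<Rightarrow> - (X $ Inl j $ Inr i)
    | (Inr i, Inl j) \<Rightarrow> - (X $ Inr j $ Inl i)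
    | (Inr i, Inr j) \<Rightarrow> X $ Inl j $ Inl i)"

definition sym_elems :: "('m \<Rightarrow> 'm) \<Rightarrow> 'm set" where
  "sym_elems invol = {a. invol a = a}"

definition skew_elems :: "('m::uminus \<Rightarrow> 'm) \<Rightarrow> 'm set" where
  "skew_elems invol = {a. invol a = - a}"

end

theory Submission
  imports Defs
begin

definition emat :: "'n::finite \<Rightarrow> 'n \<Rightarrow> 'a::comm_ring_1^'n^'n" where
  "emat x y = (\<chi> a b. if a = x \<and> b = y then 1 else 0)"

lemma times_if01: "(c::'a::comm_ring_1) * (if Q then 1 else 0) = (if Q then c else 0)"
  "(if Q then 1 else 0) * c = (if Q then c else 0)" by simp_all

lemma mul_emat: "((P::'a::comm_ring_1^'n::finite^'n) ** emat x y) $ a $ b = (if b = y then P$a$x else 0)"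
  by (cases "b = y") (simp_all add: matrix_matrix_mult_def emat_def times_if01)

lemma emat_mul: "(emat x y ** (P::'a::comm_ring_1^'n::finite^'n)) $ a $ b = (if a = x then P$y$b else 0)"
  by (cases "a = x") (simp_all add: matrix_matrix_mult_def emat_def times_if01)

lemma sum_split: "sum f (UNIV::('k::finite+'k) set) = sum (\<lambda>l. f (Inl l)) UNIV + sum (\<lambda>l. f (Inr l)) UNIV"
  using sum.Plus[of "UNIV::'k set" "UNIV::'k set" f] by (simp add: comp_def)

lemma symp_mult: "symplectic_inv ((X::'a::comm_ring_1^('k::finite+'k)^('k+'k)) ** Y) = symplectic_inv Y ** symplectic_inv X"
proof -
  have "symplectic_inv (X ** Y) $ r $ c = (symplectic_inv Y ** symplectic_inv X) $ r $ c" for r c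
    by (cases r; cases c) (simp_all add: symplectic_inv_def matrix_matrix_mult_def sum_split
          algebra_simps sum_negf)
  then show ?thesis by (simp add: vec_eq_iff)
qed

lemma symp_one: "symplectic_inv (mat 1 :: 'a::comm_ring_1^('k::finite+'k)^('k+'k)) = mat 1"
proof -
  have "symplectic_inv (mat 1 :: 'a^('k+'k)^('k+'k)) $ r $ c = mat 1 $ r $ c" for r c
    by (cases r; cases c) (simp_all add: symplectic_inv_def mat_def)
  then show ?thesis by (simp add: vec_eq_iff)
qed

lemma symp_neg: "symplectic_inv (- X :: 'a::comm_ring_1^('k::finite+'k)^('k+'k)) = - symplectic_inv X"
proof -
  have "symplectic_inv (- X) $ r $ c = (- symplectic_inv X) $ r $ c" for r c
    by (cases r; cases c) (simp_all add: symplectic_inv_def)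
  then show ?thesis by (simp add: vec_eq_iff)
qed


lemma mat_mul_neg: "(A::'a::comm_ring_1^'n::finite^'n) ** (- B) = - (A ** B)"
  "(- A) ** (B::'a::comm_ring_1^'n::finite^'n) = - (A ** B)"
  by (simp_all add: vec_eq_iff matrix_matrix_mult_def sum_negf)

lemma mat_add_distrib: "(A::'a::comm_ring_1^'n::finite^'n) ** (B + C) = A ** B + A ** C"
  "(A + B) ** (C::'a::comm_ring_1^'n::finite^'n) = A ** C + B ** C"
  by (simp_all add: vec_eq_iff matrix_matrix_mult_def distrib_left distrib_right sum.distrib)

lemma inv_facts:
  assumes "invertible (u::'a::comm_ring_1^'n::finite^'n)"
  shows "u ** matrix_inv u = mat 1" "matrix_inv u ** u = mat 1"
proof -
  have "\<exists>A'. u ** A' = mat 1 \<and> A' ** u = mat 1" using assms by (simp add: invertible_def)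
  from someI_ex[OF this] show "u ** matrix_inv u = mat 1" "matrix_inv u ** u = mat 1"
    by (simp_all add: matrix_inv_def)
qed

lemma key:
  fixes f :: "'a::comm_ring_1^'n::finite^'n \<Rightarrow> 'a^'n^'n"
  assumes fm: "\<And>X Y. f (X ** Y) = f Y ** f X" and f1: "f (mat 1) = mat 1"
    and uw1: "u ** w = mat 1" and uw2: "w ** u = mat 1"
  shows "f u ** X ** f w = w ** X ** u \<longleftrightarrow> (u ** f u) ** X = X ** (u ** f u)"
proof -
  have a: "f u ** f w = mat 1" using fm[of w u] uw2 f1 by simp
  have b: "f w ** f u = mat 1" using fm[of u w] uw1 f1 by simp
  have a': "f u ** (f w ** Z) = Z" for Z :: "'a^'n^'n" by (simp add: matrix_mul_assoc a)
  have b': "f w ** (f u ** Z) = Z" for Z :: "'a^'n^'n" by (simp add: matrix_mul_assoc b)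
  have u': "u ** (w ** Z) = Z" for Z :: "'a^'n^'n" by (simp add: matrix_mul_assoc uw1)
  have w': "w ** (u ** Z) = Z" for Z :: "'a^'n^'n" by (simp add: matrix_mul_assoc uw2)
  show ?thesis
  proof
    assume h: "f u ** X ** f w = w ** X ** u"
    have "u ** f u ** X = u ** (f u ** X ** f w) ** f u"
      by (simp add: matrix_mul_assoc[symmetric] b)
    also have "\<dots> = u ** (w ** X ** u) ** f u" using h by simp
    also have "\<dots> = X ** (u ** f u)" by (simp add: matrix_mul_assoc[symmetric] u')
    finally show "(u ** f u) ** X = X ** (u ** f u)" .
  next
    assume h: "(u ** f u) ** X = X ** (u ** f u)"
    have "f u ** X ** f w = w ** ((u ** f u) ** X) ** f w"
      by (simp add: matrix_mul_assoc[symmetric] w')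
    also have "\<dots> = w ** (X ** (u ** f u)) ** f w" using h by simp
    also have "\<dots> = w ** X ** u" by (simp add: matrix_mul_assoc[symmetric] a)
    finally show "f u ** X ** f w = w ** X ** u" .
  qed
qed

lemma scalar_comm:
  assumes "\<And>a b. (P::'a::comm_ring_1^'n::finite^'n) $ a $ b = (if a = b then c else 0)"
  shows "P ** K = K ** P"
  proof -
  have "x * (if Q then c else 0) = (if Q then x * c else 0)" for x and Q
    by simp
  then show ?thesis
    by (simp add: vec_eq_iff matrix_matrix_mult_def assms mult.commute eq_commute[of _ "_::'n"] cong: if_cong)
qed

lemma part1:
  fixes u :: "'a::field ^ 'n::finite ^ 'n"
  assumes iu: "invertible u"
    and H: "(\<lambda>a. matrix_inv u ** a ** u) ` sym_elems transpose \<subseteq> sym_elems transpose"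
  shows "(\<lambda>a. matrix_inv u ** a ** u) ` skew_elems transpose \<subseteq> skew_elems transpose"
proof -
  define w where "w = matrix_inv u"
  define P where "P = u ** transpose u"
  note uw = inv_facts[OF iu, folded w_def]
  note K = key[of transpose, OF matrix_transpose_mul transpose_mat uw]
  have C: "P ** X = X ** P" if "transpose X = X" for X
  proof -
    have "transpose (w ** X ** u) = w ** X ** u" using H that by (auto simp: sym_elems_def w_def)
    then have "transpose u ** X ** transpose w = w ** X ** u"
      by (simp add: matrix_transpose_mul that matrix_mul_assoc)
    then show ?thesis using K P_def by simp
  qed
  have off: "P $ a $ x = 0" if "a \<noteq> x" for a x
  proof -
    have "transpose (emat x x :: 'a^'n^'n) = emat x x" by (simp add: vec_eq_iff transpose_def emat_def)
    from C[OF this] have "(P ** emat x x) $ a $ x = (emat x x ** P) $ a $ x" by simp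
    then show ?thesis using that by (simp add: mul_emat emat_mul)
  qed
  have dg: "P $ x $ x = P $ y $ y" for x y
  proof (cases "x = y")
    case False
    have "transpose (emat x y + emat y x :: 'a^'n^'n) = emat x y + emat y x"
      by (simp add: vec_eq_iff transpose_def emat_def conj_commute add.commute)
    from C[OF this] have "(P ** (emat x y + emat y x)) $ x $ y = ((emat x y + emat y x) ** P) $ x $ y" by simp
    then show ?thesis using False by (simp add: mat_add_distrib mul_emat emat_mul)
  qed simp
  have sc: "P $ a $ b = (if a = b then P $ x0 $ x0 else 0)" for a b x0
    using off dg by auto
  show ?thesis
  proof (clarsimp simp: skew_elems_def w_def[symmetric])
    fix X :: "'a^'n^'n" assume X: "transpose X = - X"
    have "P ** X = X ** P" by (rule scalar_comm[OF sc])
    then have e: "transpose u ** X ** transpose w = w ** X ** u" using K P_def by simp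
    have "transpose (w ** X ** u) = transpose u ** (- X) ** transpose w"
      by (simp add: matrix_transpose_mul X matrix_mul_assoc)
    also have "\<dots> = - (w ** X ** u)" using e by (simp add: mat_mul_neg)
    finally show "transpose (w ** X ** u) = - (w ** X ** u)" .
  qed
qed


lemma part2:
  fixes v :: "'a::field ^ ('k::finite + 'k) ^ ('k + 'k)"
  assumes iv: "invertible v"
    and H: "(\<lambda>a. matrix_inv v ** a ** v) ` skew_elems symplectic_inv \<subseteq> skew_elems symplectic_inv"
  shows "(\<lambda>a. matrix_inv v ** a ** v) ` sym_elems symplectic_inv \<subseteq> sym_elems symplectic_inv"
proof -
  define w where "w = matrix_inv v"
  define P where "P = v ** symplectic_inv v"
  note uw = inv_facts[OF iv, folded w_def]
  note K = key[of symplectic_inv, OF symp_mult symp_one uw]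
  have C: "P ** X = X ** P" if "symplectic_inv X = - X" for X
  proof -
    have "symplectic_inv (w ** X ** v) = - (w ** X ** v)" using H that by (auto simp: skew_elems_def w_def)
    then have "- (symplectic_inv v ** X ** symplectic_inv w) = - (w ** X ** v)"
      by (simp add: symp_mult that matrix_mul_assoc mat_mul_neg)
    then have "symplectic_inv v ** X ** symplectic_inv w = w ** X ** v" by simp
    then show ?thesis using K P_def by simp
  qed
  have sk1: "symplectic_inv (emat (Inl i) (Inr i) :: 'a^('k+'k)^('k+'k)) = - emat (Inl i) (Inr i)" for i
  proof -
    have "symplectic_inv (emat (Inl i) (Inr i) :: 'a^('k+'k)^('k+'k)) $ r $ c = (- emat (Inl i) (Inr i)) $ r $ c" for r c
      by (cases r; cases c) (auto simp: symplectic_inv_def emat_def)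
    then show ?thesis by (simp add: vec_eq_iff)
  qed
  have sk2: "symplectic_inv (emat (Inr i) (Inl i) :: 'a^('k+'k)^('k+'k)) = - emat (Inr i) (Inl i)" for i
  proof -
    have "symplectic_inv (emat (Inr i) (Inl i) :: 'a^('k+'k)^('k+'k)) $ r $ c = (- emat (Inr i) (Inl i)) $ r $ c" for r c
      by (cases r; cases c) (auto simp: symplectic_inv_def emat_def)
    then show ?thesis by (simp add: vec_eq_iff)
  qed
  have sk3: "symplectic_inv (emat (Inl i) (Inr j) + emat (Inl j) (Inr i) :: 'a^('k+'k)^('k+'k))
     = - (emat (Inl i) (Inr j) + emat (Inl j) (Inr i))" for i j
  proof -
    have "symplectic_inv (emat (Inl i) (Inr j) + emat (Inl j) (Inr i) :: 'a^('k+'k)^('k+'k)) $ r $ c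
        = (- (emat (Inl i) (Inr j) + emat (Inl j) (Inr i))) $ r $ c" for r c
      by (cases r; cases c) (simp_all add: symplectic_inv_def emat_def conj_commute add.commute)
    then show ?thesis by (simp add: vec_eq_iff)
  qed
  have offL: "P $ a $ Inl i = 0" if "a \<noteq> Inl i" for a i
  proof -
    from C[OF sk1[of i]] have "(P ** emat (Inl i) (Inr i)) $ a $ Inr i = (emat (Inl i) (Inr i) ** P) $ a $ Inr i" by simp
    then show ?thesis using that by (simp add: mul_emat emat_mul)
  qed
  have offR: "P $ a $ Inr i = 0" if "a \<noteq> Inr i" for a i
  proof -
    from C[OF sk2[of i]] have "(P ** emat (Inr i) (Inl i)) $ a $ Inl i = (emat (Inr i) (Inl i) ** P) $ a $ Inl i" by simp
    then show ?thesis using that by (simp add: mul_emat emat_mul)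
  qed
  have LR: "P $ Inl i $ Inl i = P $ Inr i $ Inr i" for i
  proof -
    from C[OF sk1[of i]] have "(P ** emat (Inl i) (Inr i)) $ Inl i $ Inr i = (emat (Inl i) (Inr i) ** P) $ Inl i $ Inr i" by simp
    then show ?thesis by (simp add: mul_emat emat_mul)
  qed
  have LL: "P $ Inl i $ Inl i = P $ Inl j $ Inl j" for i j
  proof (cases "i = j")
    case False
    from C[OF sk3[of i j]] have "(P ** (emat (Inl i) (Inr j) + emat (Inl j) (Inr i))) $ Inl i $ Inr j
       = ((emat (Inl i) (Inr j) + emat (Inl j) (Inr i)) ** P) $ Inl i $ Inr j" by simp
    then show ?thesis using False LR[of j] by (simp add: mat_add_distrib mul_emat emat_mul)
  qed simp
  have dg: "P $ x $ x = P $ Inl i0 $ Inl i0" for x i0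
  proof (cases x)
    case (Inl j) then show ?thesis using LL[of j i0] by simp
  next
    case (Inr j) then show ?thesis using LR[of j] LL[of j i0] by simp
  qed
  have sc: "P $ a $ b = (if a = b then P $ Inl i0 $ Inl i0 else 0)" for a b i0
  proof (cases "a = b")
    case True then show ?thesis using dg by simp
  next
    case False then show ?thesis by (cases b) (simp_all add: offL offR)
  qed
  show ?thesis
  proof (clarsimp simp: sym_elems_def w_def[symmetric])
    fix X :: "'a^('k+'k)^('k+'k)" assume X: "symplectic_inv X = X"
    have "P ** X = X ** P" by (rule scalar_comm[OF sc])
    then have e: "symplectic_inv v ** X ** symplectic_inv w = w ** X ** v" using K P_def by simp
    show "symplectic_inv (w ** X ** v) = w ** X ** v"
      using e by (simp add: symp_mult X matrix_mul_assoc)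
  qed
qed

theorem mainTheorem13:
  fixes u :: "'a::field ^ 'n::finite ^ 'n"
    and v :: "'a ^ ('k::finite + 'k) ^ ('k + 'k)"
  shows "(invertible u \<and>
            (\<lambda>a. matrix_inv u ** a ** u) ` sym_elems transpose \<subseteq> sym_elems transpose
          \<longrightarrow> (\<lambda>a. matrix_inv u ** a ** u) ` skew_elems transpose \<subseteq> skew_elems transpose)
       \<and> (invertible v \<and>
            (\<lambda>a. matrix_inv v ** a ** v) ` skew_elems symplectic_inv \<subseteq> skew_elems symplectic_inv
          \<longrightarrow> (\<lambda>a. matrix_inv v ** a ** v) ` sym_elems symplectic_inv \<subseteq> sym_elems symplectic_inv)"
  using part1[of u] part2[of v] by blast

end
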